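(* Let $f$ be a noisy process with noise variance $\sigma^2>0$ and $\pi_f$ its posterior prediction map. Then $\pi_f$ is continuous: if $D_i\to D$ in $(\mathcal D,d_{\mathcal D})$, then $\pi_f(D_i)\rightharpoonup\pi_f(D)$ in the sense of weak convergence of noisy processes.
   Context: A stochastic process $f$ on $\mathbb R$ is noisy with noise variance $\sigma^2>0$ if $f=f^{\mathrm s}+f^{\mathrm n}$ with $f^{\mathrm s},f^{\mathrm n}$ independent, $f^{\mathrm s}$ (smooth part) having continuous sample paths, and $(f^{\mathrm n}(x_1),\dots,f^{\mathrm n}(x_n))\sim\mathcal N(\mathbf 0,\sigma^2\mathbf I_n)$ for pairwise distinct $x_i$. Data sets: $\mathcal D=\bigcup_{n\ge0}(\mathbb R\times\mathbb R)^n$, $D=(\mathbf x,\mathbf y)$, with metric $d_{\mathcal D}(D_1,D_2)=\|\mathbf x_1-\mathbf x_2\|_2+\|\mathbf y_1-\mathbf y_2\|_2$ if $|\mathbf x_1|=|\mathbf x_2|$ and $\infty$ otherwise. Posterior prediction map: for $D=(\mathbf x,\mathbf y)$, let $f^{\mathrm s}_D$ have law $\mu^{\mathrm s}_D$ with $\frac{d\mu^{\mathrm s}_D}{d\mu^{\mathrm s}}(g)=\frac{\mathcal N(\mathbf y\mid g(\mathbf x),\sigma^2\mathbf I)}{\mathbb E[\mathcal N(\mathbf y\mid f^{\mathrm s}(\mathbf x),\sigma^2\mathbf I)]}$, where $\mu^{\mathrm s}$ is the law of $f^{\mathrm s}$ on $C(\mathbb R,\mathbb R)$; $\pi_f(D)$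 is the noisy process $f^{\mathrm s}_D+\hat f^{\mathrm n}$ with $\hat f^{\mathrm n}$ an independent copy of $f^{\mathrm n}$. Weak convergence of noisy processes: $f_i\rightharpoonup f$ iff $f^{\mathrm s}_i\rightharpoonup f^{\mathrm s}$ weakly as random elements of $C(\mathbb R,\mathbb R)$ with the topology of uniform convergence on compact sets, and the noise variances converge. *)

theory Defs
  imports "HOL-Probability.Probability"
begin

definition Cspace :: "(real \<Rightarrow> real) set" where
  "Cspace = {g. continuous_on UNIV g}"

definition cu_topology :: "(real \<Rightarrow> real) topology" where
  "cu_topology = topology (\<lambda>U. U \<subseteq> Cspace \<and>
     (\<forall>g\<in>U. \<exists>K e. compact K \<and> e > 0 \<and> {h\<in>Cspace. \<forall>x\<in>K. \<bar>h x - g x\<bar> < e} \<subseteq> U))"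

definition borel_of_top :: "'a topology \<Rightarrow> 'a measure" where
  "borel_of_top T = sigma (topspace T) {U. openin T U}"

definition Cborel :: "(real \<Rightarrow> real) measure" where
  "Cborel = borel_of_top cu_topology"

definition weak_conv_C :: "(nat \<Rightarrow> (real \<Rightarrow> real) measure) \<Rightarrow> (real \<Rightarrow> real) measure \<Rightarrow> bool" where
  "weak_conv_C \<mu>s \<mu> \<longleftrightarrow>
     (\<forall>h. continuous_map cu_topology euclideanreal h \<and> (\<exists>B. \<forall>g\<in>Cspace. \<bar>h g\<bar> \<le> B) \<longrightarrow>
        (\<lambda>i. \<integral>g. h g \<partial>(\<mu>s i)) \<longlonglongrightarrow> (\<integral>g. h g \<partial>\<mu>))"

definition noisy_process ::
  "'w measure \<Rightarrow> ('w \<Rightarrow> real \<Rightarrow> real) \<Rightarrow> ('w \<Rightarrow> real \<Rightarrow> real) \<Rightarrow> real \<Rightarrow> bool" where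
  "noisy_process P fs fn \<sigma> \<longleftrightarrow>
     prob_space P \<and> \<sigma> > 0 \<and>
     fs \<in> measurable P Cborel \<and>
     (\<forall>\<omega>\<in>space P. continuous_on UNIV (fs \<omega>)) \<and>
     fn \<in> measurable P (PiM UNIV (\<lambda>_. borel)) \<and>
     prob_space.indep_var P Cborel fs (PiM UNIV (\<lambda>_. borel)) fn \<and>
     prob_space.indep_vars P (\<lambda>_. borel) (\<lambda>x \<omega>. fn \<omega> x) UNIV \<and>
     (\<forall>x. distributed P lborel (\<lambda>\<omega>. fn \<omega> x) (normal_density 0 \<sigma>))"

definition smooth_law :: "'w measure \<Rightarrow> ('w \<Rightarrow> real \<Rightarrow> real) \<Rightarrow> (real \<Rightarrow> real) measure" where
  "smooth_law P fs = distr P Cborel fs"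

type_synonym dataset = "(real \<times> real) list"

definition dD :: "dataset \<Rightarrow> dataset \<Rightarrow> ereal" where
  "dD D1 D2 = (if length D1 = length D2 then
      ereal (sqrt (\<Sum>k<length D1. (fst (D1!k) - fst (D2!k))^2) +
             sqrt (\<Sum>k<length D1. (snd (D1!k) - snd (D2!k))^2))
    else \<infinity>)"

definition gauss_lik :: "real \<Rightarrow> dataset \<Rightarrow> (real \<Rightarrow> real) \<Rightarrow> real" where
  "gauss_lik \<sigma> D g = (\<Prod>k<length D. normal_density (g (fst (D!k))) \<sigma> (snd (D!k)))"

definition post_smooth :: "(real \<Rightarrow> real) measure \<Rightarrow> real \<Rightarrow> dataset \<Rightarrow> (real \<Rightarrow> real) measure" where
  "post_smooth \<mu> \<sigma> D =
     density \<mu> (\<lambda>g. ennreal (gauss_lik \<sigma> D g / (\<integral>g'. gauss_lik \<sigma> D g' \<partial>\<mu>)))"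

text \<open>A noisy process is represented (up to law) by the law of its smooth part and its
  noise variance; the posterior prediction pi_f(D) = fs_D + independent copy of fn.\<close>
definition post_pred :: "'w measure \<Rightarrow> ('w \<Rightarrow> real \<Rightarrow> real) \<Rightarrow> real \<Rightarrow> dataset
    \<Rightarrow> (real \<Rightarrow> real) measure \<times> real" where
  "post_pred P fs \<sigma> D = (post_smooth (smooth_law P fs) \<sigma> D, \<sigma>^2)"

definition noisy_weak_conv ::
  "(nat \<Rightarrow> (real \<Rightarrow> real) measure \<times> real) \<Rightarrow> (real \<Rightarrow> real) measure \<times> real \<Rightarrow> bool" where
  "noisy_weak_conv fs f \<longleftrightarrow>
     weak_conv_C (\<lambda>i. fst (fs i)) (fst f) \<and> (\<lambda>i. snd (fs i)) \<longlonglongrightarrow> snd f"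

end

theory Submission
  imports Defs
begin

lemma istop_cu: "istopology (\<lambda>U. U \<subseteq> Cspace \<and>
     (\<forall>g\<in>U. \<exists>K e. compact K \<and> e > 0 \<and> {h\<in>Cspace. \<forall>x\<in>K. \<bar>h x - g x\<bar> < e} \<subseteq> U))"
  unfolding istopology_def
proof (rule conjI; intro allI impI)
  fix S T :: "(real \<Rightarrow> real) set"
  assume S: "S \<subseteq> Cspace \<and> (\<forall>g\<in>S. \<exists>K e. compact K \<and> e > 0 \<and> {h\<in>Cspace. \<forall>x\<in>K. \<bar>h x - g x\<bar> < e} \<subseteq> S)"
    and T: "T \<subseteq> Cspace \<and> (\<forall>g\<in>T. \<exists>K e. compact K \<and> e > 0 \<and> {h\<in>Cspace. \<forall>x\<in>K. \<bar>h x - g x\<bar> < e} \<subseteq> T)"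
  show "S \<inter> T \<subseteq> Cspace \<and> (\<forall>g\<in>S \<inter> T. \<exists>K e. compact K \<and> e > 0 \<and> {h\<in>Cspace. \<forall>x\<in>K. \<bar>h x - g x\<bar> < e} \<subseteq> S \<inter> T)"
  proof (intro conjI ballI)
    show "S \<inter> T \<subseteq> Cspace" using S by blast
    fix g assume "g \<in> S \<inter> T"
    then have gS: "g \<in> S" and gT: "g \<in> T" by auto
    obtain K1 e1 where 1: "compact K1" "e1 > 0" "{h\<in>Cspace. \<forall>x\<in>K1. \<bar>h x - g x\<bar> < e1} \<subseteq> S"
      using S gS by blast
    obtain K2 e2 where 2: "compact K2" "e2 > 0" "{h\<in>Cspace. \<forall>x\<in>K2. \<bar>h x - g x\<bar> < e2} \<subseteq> T"
      using T gT by blast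
    show "\<exists>K e. compact K \<and> e > 0 \<and> {h\<in>Cspace. \<forall>x\<in>K. \<bar>h x - g x\<bar> < e} \<subseteq> S \<inter> T"
      apply (rule exI[of _ "K1 \<union> K2"], rule exI[of _ "min e1 e2"])
      using 1 2 by auto
  qed
next
  fix KK :: "(real \<Rightarrow> real) set set"
  assume "\<forall>K\<in>KK. K \<subseteq> Cspace \<and> (\<forall>g\<in>K. \<exists>Ka e. compact Ka \<and> e > 0 \<and> {h\<in>Cspace. \<forall>x\<in>Ka. \<bar>h x - g x\<bar> < e} \<subseteq> K)"
  then show "\<Union>KK \<subseteq> Cspace \<and> (\<forall>g\<in>\<Union>KK. \<exists>Ka e. compact Ka \<and> e > 0 \<and> {h\<in>Cspace. \<forall>x\<in>Ka. \<bar>h x - g x\<bar> < e} \<subseteq> \<Union>KK)"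
    by (smt (verit) Sup_upper Union_least Union_iff subset_trans)
qed

lemma openin_cu: "openin cu_topology U \<longleftrightarrow> U \<subseteq> Cspace \<and>
     (\<forall>g\<in>U. \<exists>K e. compact K \<and> e > 0 \<and> {h\<in>Cspace. \<forall>x\<in>K. \<bar>h x - g x\<bar> < e} \<subseteq> U)"
  unfolding cu_topology_def using topology_inverse'[OF istop_cu] by simp

lemma topspace_cu: "topspace cu_topology = Cspace"
proof -
  have "openin cu_topology Cspace" unfolding openin_cu
    by (auto intro!: exI[of _ "{}"] exI[of _ 1])
  moreover have "\<And>U. openin cu_topology U \<Longrightarrow> U \<subseteq> Cspace" by (simp add: openin_cu)
  ultimately show ?thesis by (metis openin_subset openin_topspace subset_antisym)
qed

lemma space_Cborel: "space Cborel = Cspace"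
  unfolding Cborel_def borel_of_top_def
  by (subst space_measure_of_conv) (auto simp: topspace_cu dest: openin_subset)

lemma open_in_Cborel: "openin cu_topology U \<Longrightarrow> U \<in> sets Cborel"
  unfolding Cborel_def borel_of_top_def
  by (subst sets_measure_of) (auto dest: openin_subset)

lemma cont_meas:
  assumes "continuous_map cu_topology euclideanreal h"
  shows "h \<in> borel_measurable Cborel"
proof (rule borel_measurableI)
  fix S :: "real set" assume "open S"
  then have "openin cu_topology {x \<in> topspace cu_topology. h x \<in> S}"
    using assms by (simp add: continuous_map_def)
  then show "h -` S \<inter> space Cborel \<in> sets Cborel"
  proof -
    have "h -` S \<inter> space Cborel = {x \<in> topspace cu_topology. h x \<in> S}"
      by (auto simp: space_Cborel topspace_cu)
    then show ?thesis using open_in_Cborel[OF \<open>openin cu_topology {x \<in> topspace cu_topology. h x \<in> S}\<close>] by simp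
  qed
qed

lemma eval_cont: "continuous_map cu_topology euclideanreal (\<lambda>g. g x)"
  unfolding continuous_map_def
proof (intro conjI allI impI)
  show "(\<lambda>g. g x) \<in> topspace cu_topology \<rightarrow> topspace euclideanreal" by simp
  fix S :: "real set" assume "openin euclideanreal S"
  then have S: "open S" by simp
  show "openin cu_topology {g \<in> topspace cu_topology. g x \<in> S}"
    unfolding openin_cu topspace_cu
  proof (intro conjI ballI)
    fix g assume "g \<in> {g \<in> Cspace. g x \<in> S}"
    then obtain e where e: "e > 0" "ball (g x) e \<subseteq> S" using S openE by auto
    show "\<exists>K e. compact K \<and> e > 0 \<and> {h\<in>Cspace. \<forall>x\<in>K. \<bar>h x - g x\<bar> < e} \<subseteq> {g \<in> Cspace. g x \<in> S}"
      apply (rule exI[of _ "{x}"], rule exI[of _ e])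
    proof (intro conjI)
      show "{h\<in>Cspace. \<forall>y\<in>{x}. \<bar>h y - g y\<bar> < e} \<subseteq> {g \<in> Cspace. g x \<in> S}"
      proof
        fix h assume h: "h \<in> {h\<in>Cspace. \<forall>y\<in>{x}. \<bar>h y - g y\<bar> < e}"
        then have "h x \<in> ball (g x) e" by (simp add: dist_real_def abs_minus_commute)
        then show "h \<in> {g \<in> Cspace. g x \<in> S}" using h e by blast
      qed
    qed (use e in auto)
  qed blast
qed

lemma eval_meas: "(\<lambda>g. g x) \<in> borel_measurable Cborel"
  by (rule cont_meas[OF eval_cont])

lemma lik_meas: "gauss_lik \<sigma> D \<in> borel_measurable Cborel"
  unfolding gauss_lik_def
  apply (rule borel_measurable_prod)
  apply (rule measurable_compose[OF eval_meas])
  unfolding normal_density_def by measurable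


lemma nd_le: "\<sigma> > 0 \<Longrightarrow> normal_density m \<sigma> x \<le> 1 / sqrt (2*pi*\<sigma>^2)"
proof -
  have "exp (- ((x - m)^2) / (2 * \<sigma>^2)) \<le> 1" by simp
  then have "exp (- ((x - m)^2) / (2 * \<sigma>^2)) / sqrt (2*pi*\<sigma>^2) \<le> 1 / sqrt (2*pi*\<sigma>^2)"
    by (rule divide_right_mono) simp
  then show ?thesis by (simp add: normal_density_def)
qed

lemma lik_le: "\<sigma> > 0 \<Longrightarrow> gauss_lik \<sigma> D g \<le> (1 / sqrt (2*pi*\<sigma>^2)) ^ length D"
  unfolding gauss_lik_def
  using prod_mono[of "{..<length D}" "\<lambda>k. normal_density (g (fst (D!k))) \<sigma> (snd (D!k))" "\<lambda>_. 1 / sqrt (2*pi*\<sigma>^2)"]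
  by (simp add: nd_le)

lemma lik_nonneg: "0 \<le> gauss_lik \<sigma> D g"
  unfolding gauss_lik_def by (simp add: prod_nonneg)

lemma lik_pos: "\<sigma> > 0 \<Longrightarrow> 0 < gauss_lik \<sigma> D g"
  unfolding gauss_lik_def by (simp add: prod_pos normal_density_pos)

lemma post_int:
  fixes L h :: "'a \<Rightarrow> real"
  assumes h: "h \<in> borel_measurable M" and L: "L \<in> borel_measurable M" "\<And>g. 0 \<le> L g"
  shows "(\<integral>g. h g \<partial>density M (\<lambda>g. ennreal (L g / (\<integral>g'. L g' \<partial>M)))) = (\<integral>g. L g * h g \<partial>M) / (\<integral>g'. L g' \<partial>M)"
proof -
  have Z: "0 \<le> (\<integral>g'. L g' \<partial>M)" by (rule integral_nonneg_AE) (use L in auto)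
  have "(\<integral>g. h g \<partial>density M (\<lambda>g. ennreal (L g / (\<integral>g'. L g' \<partial>M)))) = (\<integral>g. (L g / (\<integral>g'. L g' \<partial>M)) *\<^sub>R h g \<partial>M)"
    by (rule integral_density) (use assms Z in auto)
  then show ?thesis by simp
qed

theorem mainTheorem10:
  fixes P :: "'w measure" and fs fn :: "'w \<Rightarrow> real \<Rightarrow> real" and \<sigma> :: real
    and Ds :: "nat \<Rightarrow> dataset" and D :: dataset
  assumes "noisy_process P fs fn \<sigma>"
    and "(\<lambda>i. dD (Ds i) D) \<longlonglongrightarrow> 0"
  shows "noisy_weak_conv (\<lambda>i. post_pred P fs \<sigma> (Ds i)) (post_pred P fs \<sigma> D)"
proof -
  have P: "prob_space P" and sig: "\<sigma> > 0" and fsm: "fs \<in> measurable P Cborel"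
    using assms(1) unfolding noisy_process_def by auto
  define \<mu> where "\<mu> = smooth_law P fs"
  have pmu: "prob_space \<mu>" unfolding \<mu>_def smooth_law_def
    by (rule prob_space.prob_space_distr[OF P fsm])
  have smu: "space \<mu> = Cspace" unfolding \<mu>_def smooth_law_def by (simp add: space_Cborel)
  have mmu: "borel_measurable \<mu> = borel_measurable Cborel" unfolding \<mu>_def smooth_law_def by simp
  have likm: "gauss_lik \<sigma> D' \<in> borel_measurable \<mu>" for D' using lik_meas mmu by blast
  have "eventually (\<lambda>i. dD (Ds i) D < 1) sequentially"
    using assms(2) by (rule order_tendstoD) simp
  then obtain N where N: "\<And>i. i \<ge> N \<Longrightarrow> dD (Ds i) D < 1" by (auto simp: eventually_sequentially)
  have len: "length (Ds i) = length D" if "i \<ge> N" for i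
    using N[OF that] by (auto simp: dD_def split: if_splits)
  have lenN: "\<And>i. length (Ds (i+N)) = length D" using len by simp
  define e where "e i = sqrt (\<Sum>k<length D. (fst (Ds i!k) - fst (D!k))^2) + sqrt (\<Sum>k<length D. (snd (Ds i!k) - snd (D!k))^2)" for i
  have "(\<lambda>i. ereal (e (i+N))) \<longlonglongrightarrow> ereal 0"
  proof -
    have "(\<lambda>i. dD (Ds (i+N)) D) \<longlonglongrightarrow> 0" using LIMSEQ_ignore_initial_segment[OF assms(2)] .
    moreover have "dD (Ds (i+N)) D = ereal (e (i+N))" for i using lenN[of i] by (simp add: dD_def e_def)
    ultimately show ?thesis by (simp add: zero_ereal_def)
  qed
  then have e0: "(\<lambda>i. e (i+N)) \<longlonglongrightarrow> 0" by simp
  have fstc: "(\<lambda>i. fst (Ds (i+N) ! k)) \<longlonglongrightarrow> fst (D!k)" if "k < length D" for k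
  proof -
    have "norm (fst (Ds (i+N) ! k) - fst (D!k)) \<le> e (i+N)" for i
    proof -
      have "(fst (Ds (i+N) ! k) - fst (D!k))^2 \<le> (\<Sum>k<length D. (fst (Ds (i+N)!k) - fst (D!k))^2)"
        by (rule member_le_sum[where f="\<lambda>k. (fst (Ds (i+N)!k) - fst (D!k))^2"]) (use that in auto)
      then have "sqrt ((fst (Ds (i+N) ! k) - fst (D!k))^2) \<le> sqrt (\<Sum>k<length D. (fst (Ds (i+N)!k) - fst (D!k))^2)"
        by (rule real_sqrt_le_mono)
      moreover have "sqrt (\<Sum>k<length D. (snd (Ds (i+N)!k) - snd (D!k))^2) \<ge> 0" by (simp add: sum_nonneg)
      ultimately show ?thesis unfolding e_def real_sqrt_abs real_norm_def by linarith
    qed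
    then have "(\<lambda>i. fst (Ds (i+N) ! k) - fst (D!k)) \<longlonglongrightarrow> 0"
      by (intro Lim_null_comparison[OF _ e0]) auto
    then show ?thesis by (simp add: LIM_zero_iff)
  qed
  have sndc: "(\<lambda>i. snd (Ds (i+N) ! k)) \<longlonglongrightarrow> snd (D!k)" if "k < length D" for k
  proof -
    have "norm (snd (Ds (i+N) ! k) - snd (D!k)) \<le> e (i+N)" for i
    proof -
      have "(snd (Ds (i+N) ! k) - snd (D!k))^2 \<le> (\<Sum>k<length D. (snd (Ds (i+N)!k) - snd (D!k))^2)"
        by (rule member_le_sum[where f="\<lambda>k. (snd (Ds (i+N)!k) - snd (D!k))^2"]) (use that in auto)
      then have "sqrt ((snd (Ds (i+N) ! k) - snd (D!k))^2) \<le> sqrt (\<Sum>k<length D. (snd (Ds (i+N)!k) - snd (D!k))^2)"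
        by (rule real_sqrt_le_mono)
      moreover have "sqrt (\<Sum>k<length D. (fst (Ds (i+N)!k) - fst (D!k))^2) \<ge> 0" by (simp add: sum_nonneg)
      ultimately show ?thesis unfolding e_def real_sqrt_abs real_norm_def by linarith
    qed
    then have "(\<lambda>i. snd (Ds (i+N) ! k) - snd (D!k)) \<longlonglongrightarrow> 0"
      by (intro Lim_null_comparison[OF _ e0]) auto
    then show ?thesis by (simp add: LIM_zero_iff)
  qed
  have likc: "(\<lambda>i. gauss_lik \<sigma> (Ds (i+N)) g) \<longlonglongrightarrow> gauss_lik \<sigma> D g" if "g \<in> Cspace" for g
  proof -
    have cg: "isCont g x" for x using that by (simp add: Cspace_def continuous_on_eq_continuous_at)
    have "(\<lambda>i. \<Prod>k<length D. normal_density (g (fst (Ds (i+N)!k))) \<sigma> (snd (Ds (i+N)!k)))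
        \<longlonglongrightarrow> (\<Prod>k<length D. normal_density (g (fst (D!k))) \<sigma> (snd (D!k)))"
    proof (rule tendsto_prod)
      fix k assume k: "k \<in> {..<length D}"
      have "(\<lambda>i. g (fst (Ds (i+N)!k))) \<longlonglongrightarrow> g (fst (D!k))"
        by (rule isCont_tendsto_compose[OF cg fstc]) (use k in auto)
      then show "(\<lambda>i. normal_density (g (fst (Ds (i+N)!k))) \<sigma> (snd (Ds (i+N)!k)))
          \<longlonglongrightarrow> normal_density (g (fst (D!k))) \<sigma> (snd (D!k))"
        unfolding normal_density_def using sndc[of k] k sig by (auto intro!: tendsto_intros)
    qed
    then show ?thesis using lenN unfolding gauss_lik_def by simp
  qed
  define c where "c = (1 / sqrt (2*pi*\<sigma>^2)) ^ length D"
  have lb: "\<And>i g. \<bar>gauss_lik \<sigma> (Ds (i+N)) g\<bar> \<le> c"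
    using lik_le[OF sig] lik_nonneg lenN unfolding c_def by (metis abs_of_nonneg)
  have Zc: "(\<lambda>i. \<integral>g. gauss_lik \<sigma> (Ds (i+N)) g \<partial>\<mu>) \<longlonglongrightarrow> (\<integral>g. gauss_lik \<sigma> D g \<partial>\<mu>)"
    by (rule integral_dominated_convergence[where w="\<lambda>_. c"])
       (use likm pmu smu likc lb in \<open>auto intro!: AE_I2 prob_space.finite_measure finite_measure.integrable_const\<close>)
  have Zpos: "(\<integral>g. gauss_lik \<sigma> D g \<partial>\<mu>) \<noteq> 0"
  proof
    assume Z0: "(\<integral>g. gauss_lik \<sigma> D g \<partial>\<mu>) = 0"
    have int: "integrable \<mu> (gauss_lik \<sigma> D)"
      by (rule integrable_dominated_convergence[where w="\<lambda>_. c" and s="\<lambda>i. gauss_lik \<sigma> (Ds (i+N))"])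
       (use likm pmu smu likc lb in \<open>auto intro!: AE_I2 prob_space.finite_measure finite_measure.integrable_const\<close>)
    have "AE g in \<mu>. gauss_lik \<sigma> D g = 0"
      using integral_nonneg_eq_0_iff_AE[OF int] Z0 lik_nonneg by auto
    then have "AE g in \<mu>. False"
    proof eventually_elim
      case (elim g)
      then show False using lik_pos[OF sig, of D g] by simp
    qed
    then show False using prob_space.AE_False[OF pmu] by simp
  qed
  have wc: "weak_conv_C (\<lambda>i. post_smooth \<mu> \<sigma> (Ds i)) (post_smooth \<mu> \<sigma> D)"
    unfolding weak_conv_C_def
  proof (intro allI impI)
    fix h assume "continuous_map cu_topology euclideanreal h \<and> (\<exists>B. \<forall>g\<in>Cspace. \<bar>h g\<bar> \<le> B)"
    then obtain B where hc: "continuous_map cu_topology euclideanreal h" and hB: "\<And>g. g\<in>Cspace \<Longrightarrow> \<bar>h g\<bar> \<le> B"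
      by auto
    have "(\<lambda>_. 0) \<in> Cspace" by (simp add: Cspace_def)
    then have B0: "0 \<le> B" using hB by (meson abs_ge_zero order_trans)
    have hm: "h \<in> borel_measurable \<mu>" using cont_meas[OF hc] mmu by blast
    have Ic: "(\<lambda>i. \<integral>g. gauss_lik \<sigma> (Ds (i+N)) g * h g \<partial>\<mu>) \<longlonglongrightarrow> (\<integral>g. gauss_lik \<sigma> D g * h g \<partial>\<mu>)"
    proof (rule integral_dominated_convergence[where w="\<lambda>_. c * B"])
      show "AE g in \<mu>. (\<lambda>i. gauss_lik \<sigma> (Ds (i+N)) g * h g) \<longlonglongrightarrow> gauss_lik \<sigma> D g * h g"
        using smu likc by (auto intro!: AE_I2 tendsto_intros)
      fix i
      show "AE g in \<mu>. norm (gauss_lik \<sigma> (Ds (i+N)) g * h g) \<le> c * B"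
      proof (rule AE_I2)
        fix g assume "g \<in> space \<mu>"
        then have "\<bar>h g\<bar> \<le> B" using hB smu by auto
        then show "norm (gauss_lik \<sigma> (Ds (i+N)) g * h g) \<le> c * B"
          using lb[of i g] by (simp add: abs_mult mult_mono)
      qed
    qed (use likm hm pmu in \<open>auto intro!: prob_space.finite_measure finite_measure.integrable_const\<close>)
    have eq: "(\<integral>g. h g \<partial>post_smooth \<mu> \<sigma> D') = (\<integral>g. gauss_lik \<sigma> D' g * h g \<partial>\<mu>) / (\<integral>g. gauss_lik \<sigma> D' g \<partial>\<mu>)" for D'
      unfolding post_smooth_def by (rule post_int[OF hm likm lik_nonneg])
    show "(\<lambda>i. \<integral>g. h g \<partial>post_smooth \<mu> \<sigma> (Ds i)) \<longlonglongrightarrow> (\<integral>g. h g \<partial>post_smooth \<mu> \<sigma> D)"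
      apply (rule LIMSEQ_offset[where k=N])
      unfolding eq by (rule tendsto_divide[OF Ic Zc Zpos])
  qed
  show ?thesis
    unfolding noisy_weak_conv_def post_pred_def using wc by (simp add: \<mu>_def)
qed

end
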